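(* For $k\geq 3$ and $r\geq 2$, $$M(k;r)\leq \sum_{i=0}^{k-3}(i+1)\,M(k-i;r-1)-\frac{k^2}{2}+\frac{3k}{2}+(k-1)r.$$
   Context: A sequence of positive integers $w_1<\dots<w_n$ is an ascending wave if $w_{i+1}-w_i \geq w_i-w_{i-1}$ for $2\le i\le n-1$. $AW(k;r)$ is the least $N$ such that every $r$-coloring of $\{1,\dots,N\}$ contains a $k$-term monochromatic ascending wave. For $k\ge 2$ and $M\ge AW(k;r)$: for an $r$-coloring $\psi$ of $\{1,\dots,M\}$, $\delta_k(\psi)$ is the minimum of $w_k-w_{k-1}$ over all monochromatic $k$-term ascending waves $(w_1,\dots,w_k)$ under $\psi$, and $\Delta^M(k;r)$ is the maximum of $\delta_k(\psi)$ over all $r$-colorings $\psi$ of $\{1,\dots,M\}$. The integers $M(k;r)$ are defined by $M(k;1)=k$, $M(1;r)=1$, $M(2;r)=r+1$, and for $k\ge3$, $r\ge2$, $M(k;r)=M(k-1;r)+\Delta^{M(k-1;r)}(k-1;r)+M(k;r-1)-1$; one has $M(k;r)\ge AW(k;r)$ so these quantities are defined. *)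

theory Defs
  imports Complex_Main
begin

text \<open>A k-term ascending wave, indexed as w 1, ..., w k.\<close>
definition asc_wave :: "nat \<Rightarrow> (nat \<Rightarrow> nat) \<Rightarrow> bool" where
  "asc_wave k w \<longleftrightarrow>
     (\<forall>i\<in>{1..k}. 0 < w i) \<and>
     (\<forall>i. 1 \<le> i \<and> i < k \<longrightarrow> w i < w (Suc i)) \<and>
     (\<forall>i. 2 \<le> i \<and> i \<le> k - 1 \<longrightarrow> w (Suc i) - w i \<ge> w i - w (i - 1))"

text \<open>An r-colouring of {1..N} (colours 0..r-1; values outside {1..N} irrelevant).\<close>
definition colouring :: "nat \<Rightarrow> nat \<Rightarrow> (nat \<Rightarrow> nat) \<Rightarrow> bool" where
  "colouring N r \<psi> \<longleftrightarrow> (\<forall>i\<in>{1..N}. \<psi> i < r)"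

definition mono_wave :: "nat \<Rightarrow> nat \<Rightarrow> (nat \<Rightarrow> nat) \<Rightarrow> (nat \<Rightarrow> nat) \<Rightarrow> bool" where
  "mono_wave N k \<psi> w \<longleftrightarrow> asc_wave k w \<and> (\<forall>i\<in>{1..k}. w i \<le> N) \<and>
     (\<forall>i\<in>{1..k}. \<psi> (w i) = \<psi> (w 1))"

definition AW :: "nat \<Rightarrow> nat \<Rightarrow> nat" where
  "AW k r = (LEAST N. \<forall>\<psi>. colouring N r \<psi> \<longrightarrow> (\<exists>w. mono_wave N k \<psi> w))"

definition delta :: "nat \<Rightarrow> nat \<Rightarrow> (nat \<Rightarrow> nat) \<Rightarrow> nat" where
  "delta N k \<psi> = Min {w k - w (k - 1) | w. mono_wave N k \<psi> w}"

definition Delta :: "nat \<Rightarrow> nat \<Rightarrow> nat \<Rightarrow> nat" where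
  "Delta N k r = Max {delta N k \<psi> | \<psi>. colouring N r \<psi>}"

text \<open>M(k;r) for k \<ge> 1, r \<ge> 1 (other arguments: arbitrary values).\<close>
function Mkr :: "nat \<Rightarrow> nat \<Rightarrow> nat" where
  "Mkr k r =
     (if r \<le> 1 then k
      else if k \<le> 1 then 1
      else if k = 2 then r + 1
      else Mkr (k - 1) r + Delta (Mkr (k - 1) r) (k - 1) r + Mkr k (r - 1) - 1)"
  by auto
termination
  by (relation "measures [fst, snd]") auto

end

theory Submission
  imports Defs
begin
declare Mkr.simps[simp del]

lemma Mkr_pos: "k \<ge> 1 \<Longrightarrow> Mkr k r \<ge> 1"
proof (induction k r rule: Mkr.induct)
  case (1 k r)
  show ?case
  proof (cases "r \<le> 1 \<or> k \<le> 2")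
    case True then show ?thesis using 1 by (subst Mkr.simps) auto
  next
    case False
    then have "Mkr (k - 1) r \<ge> 1" "Mkr k (r - 1) \<ge> 1" using 1 by auto
    then show ?thesis using False by (subst Mkr.simps) auto
  qed
qed

lemma Mkr_step: "r \<ge> 2 \<Longrightarrow> k \<ge> 3 \<Longrightarrow>
  Mkr k r = Mkr (k - 1) r + Delta (Mkr (k - 1) r) (k - 1) r + Mkr k (r - 1) - 1"
  by (subst Mkr.simps) auto

lemma Mkr_two: "r \<ge> 2 \<Longrightarrow> Mkr 2 r = r + 1"
  by (subst Mkr.simps) auto

lemma Mkr_one: "Mkr k (Suc 0) = k"
  by (subst Mkr.simps) auto

lemma delta_props:
  assumes "mono_wave N k \<psi> w" "k \<ge> 1"
  shows "delta N k \<psi> \<le> w k - w (k - 1)"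
    and "\<exists>w. mono_wave N k \<psi> w \<and> w k - w (k - 1) = delta N k \<psi>"
proof -
  let ?G = "{w k - w (k - 1) | w. mono_wave N k \<psi> w}"
  have "?G \<subseteq> {..N}"
  proof
    fix x assume "x \<in> ?G"
    then obtain v where "mono_wave N k \<psi> v" "x = v k - v (k - 1)" by blast
    then show "x \<in> {..N}" using assms(2) unfolding mono_wave_def by force
  qed
  hence fin: "finite ?G" by (rule finite_subset) auto
  have ne: "w k - w (k - 1) \<in> ?G" using assms(1) by blast
  show "delta N k \<psi> \<le> w k - w (k - 1)" unfolding delta_def using fin ne by (rule Min_le)
  have "delta N k \<psi> \<in> ?G" unfolding delta_def using fin ne by (intro Min_in) auto
  then show "\<exists>w. mono_wave N k \<psi> w \<and> w k - w (k - 1) = delta N k \<psi>" by auto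
qed

lemma Delta_props:
  assumes "\<And>\<psi>. colouring N r \<psi> \<Longrightarrow> delta N k \<psi> \<le> B" "r \<ge> 1"
  shows "Delta N k r \<le> B"
    and "colouring N r \<psi> \<Longrightarrow> delta N k \<psi> \<le> Delta N k r"
proof -
  let ?S = "{delta N k \<psi> | \<psi>. colouring N r \<psi>}"
  have sub: "?S \<subseteq> {..B}" using assms(1) by auto
  hence fin: "finite ?S" by (rule finite_subset) auto
  have "colouring N r (\<lambda>_. 0)" using assms(2) unfolding colouring_def by auto
  hence ne: "?S \<noteq> {}" by blast
  have "Delta N k r \<in> ?S" unfolding Delta_def using fin ne by (rule Max_in)
  thus "Delta N k r \<le> B" using sub by auto
  show "colouring N r \<psi> \<Longrightarrow> delta N k \<psi> \<le> Delta N k r"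
    unfolding Delta_def using fin by (intro Max_ge) auto
qed

definition Dw :: "nat \<Rightarrow> nat \<Rightarrow> nat" where
  "Dw r m = r + (\<Sum>i<m-2. (Mkr (m - i) (r - 1) - 1))"

lemma Dw_two: "Dw r 2 = r" by (simp add: Dw_def)

lemma Dw_Suc: "m \<ge> 2 \<Longrightarrow> Dw r (Suc m) = Dw r m + (Mkr (Suc m) (r - 1) - 1)"
proof -
  assume m: "m \<ge> 2"
  have "Suc m - 2 = Suc (m - 2)" using m by simp
  hence "(\<Sum>i<Suc m-2. (Mkr (Suc m - i) (r - 1) - 1)) =
     (Mkr (Suc m) (r - 1) - 1) + (\<Sum>i<m-2. (Mkr (Suc m - Suc i) (r - 1) - 1))"
    by (simp only: sum.lessThan_Suc_shift) simp
  thus ?thesis unfolding Dw_def by simp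
qed

lemma id_wave: "m \<ge> 1 \<Longrightarrow> colouring m 1 \<psi> \<Longrightarrow> mono_wave m m \<psi> id"
  unfolding mono_wave_def asc_wave_def colouring_def by auto

lemma shift_wave: "asc_wave k v \<Longrightarrow> asc_wave k (\<lambda>i. b + v i)"
  unfolding asc_wave_def by auto

lemma ext_wave:
  assumes "asc_wave m v" "m \<ge> 2" "x \<ge> v m + (v m - v (m - 1))"
  shows "asc_wave (Suc m) (v(Suc m := x))"
proof -
  have "\<forall>i. 1 \<le> i \<and> i < m \<longrightarrow> v i < v (Suc i)" using assms(1) unfolding asc_wave_def by blast
  moreover have "1 \<le> m-1 \<and> m-1 < m" using assms(2) by simp
  ultimately have "v (m-1) < v (Suc (m-1))" by blast
  hence inc: "v (m-1) < v m" using assms(2) by simp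
  show ?thesis using assms inc unfolding asc_wave_def
    apply (intro conjI allI impI ballI)
    subgoal for i by (cases "i = Suc m") auto
    subgoal for i by (cases "i = m") auto
    subgoal for i by (cases "i = m") auto
    done
qed


lemma pair_wave:
  assumes "x < y" "0 < x" "y \<le> N" "\<psi> x = \<psi> y"
  shows "mono_wave N 2 \<psi> (\<lambda>i. if i \<le> 1 then x else y)"
  using assms unfolding mono_wave_def asc_wave_def by auto

lemma base2:
  assumes "colouring (r + 1) r \<psi>" "r \<ge> 1"
  shows "\<exists>w. mono_wave (r + 1) 2 \<psi> w \<and> w 2 - w 1 \<le> r"
proof -
  have "\<psi> ` {1..r+1} \<subseteq> {..<r}" using assms(1) unfolding colouring_def by auto
  hence "card (\<psi> ` {1..r+1}) \<le> card {..<r}" by (intro card_mono) auto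
  hence c: "card (\<psi> ` {1..r+1}) \<le> r" by simp
  have "\<not> inj_on \<psi> {1..r+1}"
  proof
    assume "inj_on \<psi> {1..r+1}"
    hence "card (\<psi> ` {1..r+1}) = card {1..r+1}" by (rule card_image)
    with c show False by simp
  qed
  then obtain x y where xy: "x \<in> {1..r+1}" "y \<in> {1..r+1}" "x \<noteq> y" "\<psi> x = \<psi> y"
    unfolding inj_on_def by blast
  show ?thesis
  proof (cases "x < y")
    case True
    show ?thesis
      by (rule exI[of _ "\<lambda>i. if i \<le> 1 then x else y"]) (use xy True pair_wave[of x y "r+1" \<psi>] in auto)
  next
    case False
    hence "y < x" using xy by auto
    show ?thesis
      by (rule exI[of _ "\<lambda>i. if i \<le> 1 then y else x"]) (use xy \<open>y < x\<close> pair_wave[of y x "r+1" \<psi>] in auto)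
  qed
qed


lemma recol_inj: "(x::nat) \<noteq> c \<Longrightarrow> y \<noteq> c \<Longrightarrow>
  (if x > c then x - 1 else x) = (if y > c then y - 1 else y) \<Longrightarrow> x = y"
  by (auto split: if_splits)

lemma main:
  "1 \<le> r \<Longrightarrow> 2 \<le> m \<Longrightarrow> colouring (Mkr m r) r \<psi> \<Longrightarrow>
   \<exists>w. mono_wave (Mkr m r) m \<psi> w \<and> (2 \<le> r \<longrightarrow> w m - w (m - 1) \<le> Dw r m)"
proof (induction r arbitrary: m \<psi> rule: nat_induct_at_least)
  case base
  have "mono_wave m m \<psi> id" using base by (intro id_wave) (auto simp: Mkr_one)
  then show ?case by (intro exI[of _ id]) (simp only: Mkr_one One_nat_def, simp)
next
  case (Suc r)
  have ex_r: "\<And>m \<psi>. 2 \<le> m \<Longrightarrow> colouring (Mkr m r) r \<psi> \<Longrightarrow> \<exists>w. mono_wave (Mkr m r) m \<psi> w"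
    using Suc.IH by blast
  have "\<forall>\<psi>. colouring (Mkr m (Suc r)) (Suc r) \<psi> \<longrightarrow>
     (\<exists>w. mono_wave (Mkr m (Suc r)) m \<psi> w \<and> w m - w (m - 1) \<le> Dw (Suc r) m)"
    using \<open>2 \<le> m\<close>
  proof (induction m rule: nat_induct_at_least)
    case base
    have M2: "Mkr 2 (Suc r) = Suc r + 1" using Suc.hyps by (intro Mkr_two) auto
    show ?case
    proof (intro allI impI)
      fix \<psi> assume "colouring (Mkr 2 (Suc r)) (Suc r) \<psi>"
      then obtain w where "mono_wave (Suc r + 1) 2 \<psi> w \<and> w 2 - w 1 \<le> Suc r"
        using base2[of "Suc r" \<psi>] M2 by auto
      then show "\<exists>w. mono_wave (Mkr 2 (Suc r)) 2 \<psi> w \<and> w 2 - w (2 - 1) \<le> Dw (Suc r) 2"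
        using M2 Dw_two by auto
    qed
  next
    case (Suc m)
    define N1 where "N1 = Mkr m (Suc r)"
    define D where "D = Delta N1 m (Suc r)"
    define L where "L = Mkr (Suc m) r"
    define N where "N = Mkr (Suc m) (Suc r)"
    have eq: "N = N1 + D + L - 1" unfolding N_def N1_def D_def L_def
      using Mkr_step[of "Suc r" "Suc m"] Suc.hyps \<open>1 \<le> r\<close> by simp
    have L1: "L \<ge> 1" unfolding L_def by (rule Mkr_pos) simp
    have dl: "delta N1 m \<phi> \<le> Dw (Suc r) m" if phc: "colouring N1 (Suc r) \<phi>" for \<phi>
    proof -
      obtain w where "mono_wave N1 m \<phi> w" "w m - w (m - 1) \<le> Dw (Suc r) m"
        using Suc.IH phc unfolding N1_def by blast
      then show ?thesis using delta_props(1)[of N1 m \<phi> w] Suc.hyps by simp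
    qed
    have DD: "D \<le> Dw (Suc r) m" unfolding D_def by (rule Delta_props(1)) (use dl in auto)
    have DW: "Dw (Suc r) (Suc m) = Dw (Suc r) m + (L - 1)"
      unfolding L_def using Dw_Suc[of m "Suc r"] Suc.hyps by simp
    show ?case unfolding N_def[symmetric]
    proof (intro allI impI)
      fix \<psi> assume col: "colouring N (Suc r) \<psi>"
      have col1: "colouring N1 (Suc r) \<psi>" using col eq L1 unfolding colouring_def by auto
      have dD: "delta N1 m \<psi> \<le> D" unfolding D_def
        by (rule Delta_props(2)) (use dl col1 in auto)
      obtain w0 where "mono_wave N1 m \<psi> w0"
        using Suc.IH col1 unfolding N1_def by blast
      then obtain w1 where w1: "mono_wave N1 m \<psi> w1" "w1 m - w1 (m - 1) = delta N1 m \<psi>"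
        using delta_props(2)[of N1 m \<psi> w0] Suc.hyps by auto
      define d where "d = delta N1 m \<psi>"
      define c where "c = \<psi> (w1 1)"
      define p where "p = w1 m"
      define a where "a = p + d"
      have asc1: "asc_wave m w1" and bnd1: "\<forall>i\<in>{1..m}. w1 i \<le> N1"
        and mc1: "\<forall>i\<in>{1..m}. \<psi> (w1 i) = \<psi> (w1 1)"
        using w1(1) unfolding mono_wave_def by blast+
      have pos1: "\<forall>i\<in>{1..m}. 0 < w1 i" using asc1 unfolding asc_wave_def by blast
      have pN1: "p \<le> N1" and p0: "p > 0" unfolding p_def using bnd1 pos1 Suc.hyps by auto
      have a1: "a \<ge> 1" using p0 unfolding a_def by simp
      have aN: "a + (L - 1) \<le> N" unfolding a_def using eq pN1 dD d_def L1 by simp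
      have "1 \<in> {1..m}" using Suc.hyps by simp
      hence "w1 1 \<le> N1" "0 < w1 1" using bnd1 pos1 by blast+
      hence w11: "w1 1 \<in> {1..N}" using eq L1 by auto
      have cr: "c < Suc r" using col w11 unfolding colouring_def c_def by auto
      show "\<exists>w. mono_wave N (Suc m) \<psi> w \<and> w (Suc m) - w (Suc m - 1) \<le> Dw (Suc r) (Suc m)"
      proof (cases "\<exists>j<L. \<psi> (a + j) = c")
        case True
        then obtain j where j: "j < L" "\<psi> (a + j) = c" by blast
        define w where "w = w1(Suc m := a + j)"
        have "asc_wave (Suc m) w" unfolding w_def
          by (rule ext_wave[OF asc1 Suc.hyps]) (use w1(2) a_def d_def p_def in simp)
        moreover have "\<forall>i\<in>{1..Suc m}. w i \<le> N"
        proof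
          fix i assume i: "i \<in> {1..Suc m}"
          show "w i \<le> N"
          proof (cases "i = Suc m")
            case True then show ?thesis using aN j unfolding w_def by simp
          next
            case False
            hence "i \<in> {1..m}" using i by auto
            hence "w1 i \<le> N1" using bnd1 by blast
            then show ?thesis using False eq L1 unfolding w_def by simp
          qed
        qed
        moreover have "\<forall>i\<in>{1..Suc m}. \<psi> (w i) = \<psi> (w 1)"
        proof
          fix i assume i: "i \<in> {1..Suc m}"
          have w1e: "w 1 = w1 1" unfolding w_def using Suc.hyps by simp
          show "\<psi> (w i) = \<psi> (w 1)"
          proof (cases "i = Suc m")
            case True then show ?thesis using j w1e unfolding w_def c_def by simp
          next
            case False
            hence "i \<in> {1..m}" using i by auto
            hence "\<psi> (w1 i) = \<psi> (w1 1)" using mc1 by blast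
            then show ?thesis using False w1e unfolding w_def by simp
          qed
        qed
        moreover have "w (Suc m) - w m \<le> Dw (Suc r) (Suc m)"
          using j DD dD DW unfolding w_def a_def d_def p_def by simp
        ultimately have "mono_wave N (Suc m) \<psi> w" unfolding mono_wave_def by blast
        then show ?thesis using \<open>w (Suc m) - w m \<le> Dw (Suc r) (Suc m)\<close> by auto
      next
        case False
        define \<phi> where "\<phi> = (\<lambda>i. if \<psi> (a - 1 + i) > c then \<psi> (a - 1 + i) - 1 else \<psi> (a - 1 + i))"
        have nc: "\<psi> (a - 1 + i) \<noteq> c" if "i \<in> {1..L}" for i
        proof -
          have "a - 1 + i = a + (i - 1)" using that a1 by auto
          moreover have "i - 1 < L" using that by auto
          ultimately show ?thesis using False by metis
        qed
        have colr: "colouring L r \<phi>"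
          unfolding colouring_def
        proof
          fix i assume i: "i \<in> {1..L}"
          have "a - 1 + i \<in> {1..N}" using i aN a1 by auto
          hence "\<psi> (a - 1 + i) < Suc r" using col unfolding colouring_def by auto
          then show "\<phi> i < r" using nc[OF i] cr unfolding \<phi>_def by auto
        qed
        obtain w' where w': "mono_wave L (Suc m) \<phi> w'"
          using ex_r[of "Suc m" \<phi>] colr Suc.hyps unfolding L_def by auto
        have asc': "asc_wave (Suc m) w'" and bnd': "\<forall>i\<in>{1..Suc m}. w' i \<le> L"
          and mc': "\<forall>i\<in>{1..Suc m}. \<phi> (w' i) = \<phi> (w' 1)"
          using w' unfolding mono_wave_def by blast+
        have pos': "\<forall>i\<in>{1..Suc m}. 0 < w' i" using asc' unfolding asc_wave_def by blast
        define w where "w = (\<lambda>i. (a - 1) + w' i)"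
        have "asc_wave (Suc m) w" unfolding w_def by (rule shift_wave[OF asc'])
        moreover have "\<forall>i\<in>{1..Suc m}. w i \<le> N"
        proof
          fix i assume i: "i \<in> {1..Suc m}"
          have "w' i \<le> L" using bnd' i by blast
          then show "w i \<le> N" using aN a1 L1 unfolding w_def by simp
        qed
        moreover have "\<forall>i\<in>{1..Suc m}. \<psi> (w i) = \<psi> (w 1)"
        proof
          fix i assume i: "i \<in> {1..Suc m}"
          have i1: "1 \<in> {1..Suc m}" by simp
          have "w' i \<le> L" "0 < w' i" using bnd' pos' i by blast+
          hence a: "\<psi> (a - 1 + w' i) \<noteq> c" by (intro nc) simp
          have "w' 1 \<le> L" "0 < w' 1" using bnd' pos' i1 by blast+
          hence b: "\<psi> (a - 1 + w' 1) \<noteq> c" by (intro nc) simp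
          have "\<phi> (w' i) = \<phi> (w' 1)" using mc' i by blast
          then show "\<psi> (w i) = \<psi> (w 1)" unfolding w_def \<phi>_def
            using recol_inj[OF a b] by simp
        qed
        moreover have "w (Suc m) - w m \<le> Dw (Suc r) (Suc m)"
        proof -
          have "w' (Suc m) \<le> L" "w' m > 0" using bnd' pos' Suc.hyps by auto
          then show ?thesis unfolding w_def using DW by simp
        qed
        ultimately have "mono_wave N (Suc m) \<psi> w" unfolding mono_wave_def by blast
        then show ?thesis using \<open>w (Suc m) - w m \<le> Dw (Suc r) (Suc m)\<close> by auto
      qed
    qed
  qed
  then show ?case using Suc.prems by auto
qed


lemma Delta_bound:
  assumes "r \<ge> 2" "m \<ge> 2"
  shows "Delta (Mkr m r) m r \<le> Dw r m"
proof (rule Delta_props(1))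
  fix \<psi> assume "colouring (Mkr m r) r \<psi>"
  then obtain w where "mono_wave (Mkr m r) m \<psi> w" "w m - w (m - 1) \<le> Dw r m"
    using main[of r m \<psi>] assms by auto
  then show "delta (Mkr m r) m \<psi> \<le> Dw r m" using delta_props(1)[of "Mkr m r" m \<psi> w] assms by simp
qed (use assms in simp)

lemma real_Dw:
  assumes "r \<ge> 2"
  shows "real (Dw r (n + 3)) = real r + (\<Sum>i=0..n. real (Mkr (n + 3 - i) (r - 1))) - real (n + 1)"
proof -
  have "real (Dw r (n + 3)) = real r + (\<Sum>i<Suc n. real (Mkr (n + 3 - i) (r - 1) - 1))"
    unfolding Dw_def by simp
  also have "(\<Sum>i<Suc n. real (Mkr (n + 3 - i) (r - 1) - 1)) = (\<Sum>i<Suc n. (real (Mkr (n + 3 - i) (r - 1)) - 1))"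
    using Mkr_pos by (intro sum.cong) (auto simp: of_nat_diff)
  also have "\<dots> = (\<Sum>i=0..n. real (Mkr (n + 3 - i) (r - 1))) - real (n + 1)"
    by (simp add: sum_subtractf lessThan_Suc_atMost atLeast0AtMost)
  finally show ?thesis by simp
qed

lemma final_n:
  assumes "r \<ge> 2"
  shows "real (Mkr (n + 3) r) \<le>
    (\<Sum>i=0..n. real (i + 1) * real (Mkr (n + 3 - i) (r - 1)))
      - real (n + 3) ^ 2 / 2 + 3 * real (n + 3) / 2 + (real (n + 3) - 1) * real r"
proof (induction n)
  case 0
  have "Mkr 3 r = Mkr 2 r + Delta (Mkr 2 r) 2 r + Mkr 3 (r - 1) - 1"
    using Mkr_step[of r 3] assms by simp
  moreover have "Delta (Mkr 2 r) 2 r \<le> r" using Delta_bound[of r 2] assms Dw_two by simp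
  moreover have "Mkr 2 r = r + 1" using Mkr_two assms by simp
  ultimately have "Mkr 3 r \<le> Mkr 3 (r - 1) + 2 * r" by linarith
  hence "real (Mkr 3 r) \<le> real (Mkr 3 (r - 1)) + 2 * real r" by linarith
  then show ?case by (simp add: power2_eq_square algebra_simps)
next
  case (Suc n)
  define f where "f j = real (Mkr j (r - 1))" for j
  have st: "Mkr (Suc n + 3) r = Mkr (n + 3) r + Delta (Mkr (n + 3) r) (n + 3) r + Mkr (Suc n + 3) (r - 1) - 1"
  proof -
    have h: "Suc n + 3 - 1 = n + 3" by simp
    have h3: "Suc n + 3 \<ge> 3" by simp
    show ?thesis using Mkr_step[OF assms h3] unfolding h .
  qed
  have DB: "Delta (Mkr (n + 3) r) (n + 3) r \<le> Dw r (n + 3)" using Delta_bound assms by simp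
  have p1: "Mkr (Suc n + 3) (r - 1) \<ge> 1" by (rule Mkr_pos) simp
  have "real (Mkr (Suc n + 3) r) \<le> real (Mkr (n + 3) r) + real (Dw r (n + 3)) + f (Suc n + 3) - 1"
    using st DB p1 unfolding f_def by (simp add: of_nat_diff)
  also have "\<dots> \<le> (\<Sum>i=0..n. real (i + 1) * f (n + 3 - i))
      - real (n + 3) ^ 2 / 2 + 3 * real (n + 3) / 2 + (real (n + 3) - 1) * real r
      + real r + (\<Sum>i=0..n. f (n + 3 - i)) - real (n + 1) + f (Suc n + 3) - 1"
    using Suc.IH real_Dw[OF assms, of n] unfolding f_def by simp
  also have "\<dots> = (\<Sum>i=0..Suc n. real (i + 1) * f (Suc n + 3 - i))
      - real (Suc n + 3) ^ 2 / 2 + 3 * real (Suc n + 3) / 2 + (real (Suc n + 3) - 1) * real r"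
  proof -
    have "(\<Sum>i=0..Suc n. real (i + 1) * f (Suc n + 3 - i)) =
        f (Suc n + 3) + (\<Sum>i=0..n. real (i + 2) * f (n + 3 - i))"
      by (subst sum.atLeast0_atMost_Suc_shift) (simp add: numeral_eq_Suc)
    also have "(\<Sum>i=0..n. real (i + 2) * f (n + 3 - i)) =
        (\<Sum>i=0..n. real (i + 1) * f (n + 3 - i)) + (\<Sum>i=0..n. f (n + 3 - i))"
      by (simp add: sum.distrib[symmetric] algebra_simps)
    finally have E: "(\<Sum>i=0..Suc n. real (i + 1) * f (Suc n + 3 - i)) =
        f (Suc n + 3) + ((\<Sum>i=0..n. real (i + 1) * f (n + 3 - i)) + (\<Sum>i=0..n. f (n + 3 - i)))" .
    have P: "3*real(n+3)/2 - real (n+3)^2/2 + (real(n+3)-1)*real r + real r - real(n+1) - 1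
       = 0 - real(Suc n+3)^2/2 + 3*real(Suc n+3)/2 + (real(Suc n+3)-1)*real r"
      by (simp add: power2_eq_square field_simps)
    show ?thesis unfolding E using P by linarith
  qed
  finally show ?case unfolding f_def .
qed

theorem lemma1p3:
  fixes k r :: nat
  assumes "k \<ge> 3" and "r \<ge> 2"
  shows "real (Mkr k r) \<le>
    (\<Sum>i=0..k-3. real (i + 1) * real (Mkr (k - i) (r - 1)))
      - real k ^ 2 / 2 + 3 * real k / 2 + (real k - 1) * real r"
proof -
  have k: "k = (k - 3) + 3" using assms(1) by simp
  have "\<And>i. (k - 3) + 3 - i = k - i" using assms(1) by simp
  then show ?thesis using final_n[OF assms(2), of "k - 3"] k by (metis)
qed

end
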